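(* Let $p,q,r,n$ be integers with $r\ge 0$, $q\ge 2$, $p-q=2r+1$, $n=p+q$, and suppose $q\le 2r$. Then the integrality gap of the clique-web inequality with parameters $n,p,q,r$ is at most $3$, i.e. $\mathrm{sdp}(\mathrm{CW}^r_p,-e)/\mathrm{ip}(\mathrm{CW}^r_p,-e)\le 3$.
   Context: For integers $p,r$ with $p\ge 2r+3$, the antiweb $\mathrm{AW}^r_p$ is the graph on $[p]$ with edges $\{i,i+s\}$ for $i\in[p]$, $1\le s\le r$ (indices mod $p$); the web $\mathrm{W}^r_p$ is its complement in $K_p$. With $p,q,r,n$ as in the claim, $\mathrm{CW}^r_p$ is the graph on $[n]$ consisting of a clique on $\{1,\dots,q\}$, a copy of $\mathrm{W}^r_p$ on $\{q+1,\dots,n\}$, and all edges $ij$ with $1\le i\le q<j\le n$. The clique-web inequality is $-\sum_{ij\in E(\mathrm{CW}^r_p)}x_{ij}\le q(r+1)$. For a graph $G=([n],E)$ and $w\in\mathbb{R}^E$, $\mathrm{ip}(G,w)=\max_{x\in\{\pm1\}^n}\sum_{ij\in E}w_{ij}x_ix_j$ and $\mathrm{sdp}(G,w)=\max\sum_{ij\in E}w_{ij}u_i^Tu_j$ over unit vectors $u_i\in\mathbb{R}^n$; $e$ denotes the all-ones vector in $\mathbb{R}^{E(\mathrm{CW}^r_p)}$. The integrality gap of the clique-web inequality is $\mathrm{sdp}(\mathrm{CW}^r_p,-e)/\mathrm{ip}(\mathrm{CW}^r_p,-e)$, where $\mathrm{ip}(\mathrm{CW}^r_p,-e)=q(r+1)$.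 *)

theory Defs
  imports Main "HOL-Library.FuncSet" Complex_Main
begin

text \<open>Graphs on vertex set [n] = {1..n} are given by a symmetric adjacency predicate;
  an edge ij is represented once, as the pair (i,j) with i < j.\<close>

definition edges :: "nat \<Rightarrow> (nat \<Rightarrow> nat \<Rightarrow> bool) \<Rightarrow> (nat \<times> nat) set" where
  "edges n E = {(i,j). 1 \<le> i \<and> i < j \<and> j \<le> n \<and> E i j}"

definition aw_adj :: "nat \<Rightarrow> nat \<Rightarrow> nat \<Rightarrow> nat \<Rightarrow> bool" where
  "aw_adj p r i j \<longleftrightarrow> i \<noteq> j \<and>
     (\<exists>s\<in>{1..r}. (int j - int i) mod int p = int s \<or> (int i - int j) mod int p = int s)"

definition web_adj :: "nat \<Rightarrow> nat \<Rightarrow> nat \<Rightarrow> nat \<Rightarrow> bool" where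
  "web_adj p r i j \<longleftrightarrow> i \<noteq> j \<and> \<not> aw_adj p r i j"

text \<open>CW^r_p on [n], n = p + q: clique on {1..q}, copy of W^r_p on {q+1..n}
  (vertex q+k corresponds to vertex k of W^r_p), and all edges between the two parts.\<close>
definition cw_adj :: "nat \<Rightarrow> nat \<Rightarrow> nat \<Rightarrow> nat \<Rightarrow> nat \<Rightarrow> bool" where
  "cw_adj p q r i j \<longleftrightarrow> i \<noteq> j \<and>
     ((i \<le> q \<and> j \<le> q) \<or> (i \<le> q \<and> q < j) \<or> (q < i \<and> j \<le> q) \<or>
      (q < i \<and> q < j \<and> web_adj p r (i - q) (j - q)))"

definition ip :: "nat \<Rightarrow> (nat \<Rightarrow> nat \<Rightarrow> bool) \<Rightarrow> (nat \<Rightarrow> nat \<Rightarrow> real) \<Rightarrow> real" where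
  "ip n E w = Max {(\<Sum>(i,j)\<in>edges n E. w i j * x i * x j) | x.
                    \<forall>i\<in>{1..n}. x i \<in> {-1, 1}}"

text \<open>sdp(G,w) = max over unit vectors u_1..u_n in R^n of sum_{ij in E} w_ij u_i^T u_j.
  Vectors in R^n are represented as functions on the coordinate set {1..n}.\<close>
definition sdp :: "nat \<Rightarrow> (nat \<Rightarrow> nat \<Rightarrow> bool) \<Rightarrow> (nat \<Rightarrow> nat \<Rightarrow> real) \<Rightarrow> real" where
  "sdp n E w = Sup {(\<Sum>(i,j)\<in>edges n E. w i j * (\<Sum>k=1..n. u i k * u j k)) | u.
                    \<forall>i\<in>{1..n}. (\<Sum>k=1..n. (u i k)\<^sup>2) = 1}"

end

theory Submission
  imports Defs
begin


lemma mod_case: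
  fixes x p :: int
  assumes "-p \<le> x" "x < p" "0 < p"
  shows "x mod p = (if 0 \<le> x then x else x + p)"
proof (cases "0 \<le> x")
  case True then show ?thesis using assms by simp
next
  case False
  have "x mod p = (x + p) mod p" by simp
  also have "\<dots> = x + p" using assms False by (intro mod_pos_pos_trivial) auto
  finally show ?thesis using False by simp
qed

lemma web_iff:
  assumes "a \<in> {1..p}" "b \<in> {1..p}" "p = q + 2*r + 1"
  shows "web_adj p r a b \<longleftrightarrow>
    (if a \<le> b then r+1 \<le> b-a \<and> b-a \<le> r+q else r+1 \<le> b+p-a \<and> b+p-a \<le> r+q)"
proof -
  have m1: "(int b - int a) mod int p = (if a \<le> b then int b - int a else int b - int a + int p)"
    using assms by (subst mod_case) auto
  have m2: "(int a - int b) mod int p = (if b \<le> a then int a - int b else int a - int b + int p)"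
    using assms by (subst mod_case) auto
  have ex: "(\<exists>s\<in>{1..r}. X = int s \<or> Y = int s) \<longleftrightarrow> ((1 \<le> X \<and> X \<le> int r) \<or> (1 \<le> Y \<and> Y \<le> int r))" for X Y
  proof
    assume "\<exists>s\<in>{1..r}. X = int s \<or> Y = int s" then show "((1 \<le> X \<and> X \<le> int r) \<or> (1 \<le> Y \<and> Y \<le> int r))" by auto
  next
    assume h: "((1 \<le> X \<and> X \<le> int r) \<or> (1 \<le> Y \<and> Y \<le> int r))"
    show "\<exists>s\<in>{1..r}. X = int s \<or> Y = int s"
    proof (cases "1 \<le> X \<and> X \<le> int r")
      case True then show ?thesis by (intro bexI[of _ "nat X"]) auto
    next
      case False then have "1 \<le> Y \<and> Y \<le> int r" using h by auto
      then show ?thesis by (intro bexI[of _ "nat Y"]) auto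
    qed
  qed
  show ?thesis unfolding web_adj_def aw_adj_def ex m1 m2 using assms by auto
qed

lemma web_sym: "web_adj p r a b = web_adj p r b a"
  unfolding web_adj_def aw_adj_def by auto

lemma web_deg:
  assumes "a \<in> {1..p}" "p = q + 2*r + 1"
  shows "card {b\<in>{1..p}. web_adj p r a b} = q"
proof -
  define f where "f t = (if a + t \<le> p then a + t else a + t - p)" for t
  have eq: "{b\<in>{1..p}. web_adj p r a b} = f ` {r+1..r+q}"
  proof (rule set_eqI)
    fix b
    show "b \<in> {b\<in>{1..p}. web_adj p r a b} \<longleftrightarrow> b \<in> f ` {r+1..r+q}"
    proof
      assume "b \<in> {b\<in>{1..p}. web_adj p r a b}"
      then have b: "b \<in> {1..p}" "web_adj p r a b" by auto
      show "b \<in> f ` {r+1..r+q}"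
      proof (cases "a \<le> b")
        case True
        then show ?thesis using b web_iff[OF assms(1) b(1) assms(2)] assms
          by (intro image_eqI[of _ _ "b - a"]) (auto simp: f_def)
      next
        case False
        then show ?thesis using b web_iff[OF assms(1) b(1) assms(2)] assms
          by (intro image_eqI[of _ _ "b + p - a"]) (auto simp: f_def)
      qed
    next
      assume "b \<in> f ` {r+1..r+q}"
      then obtain t where t: "t \<in> {r+1..r+q}" "b = f t" by auto
      have b: "b \<in> {1..p}" using t assms by (auto simp: f_def)
      show "b \<in> {b\<in>{1..p}. web_adj p r a b}"
        using b web_iff[OF assms(1) b assms(2)] t assms by (auto simp: f_def split: if_splits)
    qed
  qed
  have inj: "inj_on f {r+1..r+q}"
    unfolding inj_on_def f_def using assms by auto
  show ?thesis unfolding eq using card_image[OF inj] by simp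
qed



definition gram :: "(nat \<Rightarrow> nat \<Rightarrow> real) \<Rightarrow> nat \<Rightarrow> nat \<Rightarrow> nat \<Rightarrow> real" where
  "gram u n i j = (\<Sum>k=1..n. u i k * u j k)"

lemma gram_sym: "gram u n i j = gram u n j i"
  unfolding gram_def by (simp add: mult.commute)

lemma tri: "0 \<le> gram u n x x + gram u n a a + gram u n b b + 2 * gram u n x a + 2 * gram u n x b + 2 * gram u n a b"
proof -
  have "0 \<le> (\<Sum>k=1..n. (u x k + u a k + u b k)^2)" by (rule sum_nonneg) simp
  also have "\<dots> = gram u n x x + gram u n a a + gram u n b b + 2 * gram u n x a + 2 * gram u n x b + 2 * gram u n a b"
    unfolding gram_def by (simp add: power2_eq_square algebra_simps sum.distrib sum_distrib_left)
  finally show ?thesis .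
qed

lemma clique: "finite A \<Longrightarrow> 0 \<le> (\<Sum>x\<in>A. \<Sum>y\<in>A. gram u n x y)"
proof -
  have "0 \<le> (\<Sum>k=1..n. (\<Sum>x\<in>A. u x k)^2)" by (rule sum_nonneg) simp
  also have "\<dots> = (\<Sum>k=1..n. \<Sum>x\<in>A. \<Sum>y\<in>A. u x k * u y k)"
    by (simp add: power2_eq_square sum_product)
  also have "\<dots> = (\<Sum>x\<in>A. \<Sum>y\<in>A. gram u n x y)"
    unfolding gram_def sum_distrib_left
    by (subst sum.swap, rule sum.cong, simp, subst sum.swap, simp)
  finally show "0 \<le> (\<Sum>x\<in>A. \<Sum>y\<in>A. gram u n x y)" .
qed

lemma split_n:
  fixes f :: "nat \<Rightarrow> real"
  assumes "n = p + q"
  shows "(\<Sum>j=1..n. f j) = (\<Sum>j=1..q. f j) + (\<Sum>a=1..p. f (q+a))"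
proof -
  have "{1..n} = {1..q} \<union> {q+1..q+p}" using assms by auto
  then have "(\<Sum>j=1..n. f j) = (\<Sum>j=1..q. f j) + (\<Sum>j=q+1..q+p. f j)"
    by (simp add: sum.union_disjoint)
  also have "(\<Sum>j=q+1..q+p. f j) = (\<Sum>a=1..p. f (q+a))"
  proof -
    have "{q+1..q+p} = {1+q..p+q}" by (simp add: add.commute)
    then show ?thesis using sum.shift_bounds_cl_nat_ivl[of f 1 q p] by (simp add: add.commute)
  qed
  finally show ?thesis .
qed

lemma half:
  fixes g :: "nat \<Rightarrow> nat \<Rightarrow> real"
  assumes symE: "\<And>i j. E i j = E j i" and irr: "\<And>i. \<not> E i i" and symg: "\<And>i j. g i j = g j i"
  shows "(\<Sum>(i,j)\<in>edges n E. g i j) = (\<Sum>i=1..n. \<Sum>j=1..n. if E i j then g i j else 0) / 2"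
proof -
  let ?L = "\<lambda>i j. if i < j \<and> E i j then g i j else 0"
  have split: "(if E i j then g i j else 0) = ?L i j + ?L j i" for i j
    using symE[of i j] symg[of i j] irr[of i] by (cases i j rule: linorder_cases) auto
  have "(\<Sum>i=1..n. \<Sum>j=1..n. if E i j then g i j else 0)
      = (\<Sum>i=1..n. \<Sum>j=1..n. ?L i j) + (\<Sum>i=1..n. \<Sum>j=1..n. ?L j i)"
    by (simp add: split sum.distrib)
  also have "(\<Sum>i=1..n. \<Sum>j=1..n. ?L j i) = (\<Sum>i=1..n. \<Sum>j=1..n. ?L i j)"
    by (rule sum.swap)
  also have "(\<Sum>i=1..n. \<Sum>j=1..n. ?L i j) = (\<Sum>(i,j)\<in>edges n E. g i j)"
  proof -
    have "(\<Sum>i=1..n. \<Sum>j=1..n. ?L i j) = (\<Sum>(i,j)\<in>{1..n}\<times>{1..n}. ?L i j)"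
      by (simp add: sum.cartesian_product)
    also have "\<dots> = (\<Sum>(i,j)\<in>edges n E. ?L i j)"
      by (rule sum.mono_neutral_right) (auto simp: edges_def split: if_splits)
    also have "\<dots> = (\<Sum>(i,j)\<in>edges n E. g i j)"
      by (rule sum.cong) (auto simp: edges_def)
    finally show ?thesis .
  qed
  finally show ?thesis by simp
qed



lemma deg_sum:
  assumes "a \<in> {1..p}" "p = q + 2*r + 1"
  shows "(\<Sum>b=1..p. if web_adj p r a b then (c::real) else 0) = real q * c"
proof -
  have "(\<Sum>b=1..p. if web_adj p r a b then c else 0) = (\<Sum>b\<in>{b\<in>{1..p}. web_adj p r a b}. c)"
    by (rule sym, rule sum.inter_filter, simp)
  also have "\<dots> = real q * c" by (simp only: sum_constant web_deg[OF assms])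
  finally show ?thesis .
qed

lemma cross_web:
  assumes "p = q + 2*r + 1" "\<forall>i\<in>{1..n}. gram u n i i = 1" "n = p + q"
  shows "0 \<le> 3 * real p * real q * real q
     + 4 * real q * (\<Sum>x=1..q. \<Sum>a=1..p. gram u n x (q+a))
     + 2 * real q * (\<Sum>a=1..p. \<Sum>b=1..p. if web_adj p r a b then gram u n (q+a) (q+b) else 0)"
proof -
  let ?G = "gram u n"
  let ?W = "web_adj p r"
  have "0 \<le> (\<Sum>x=1..q. \<Sum>a=1..p. \<Sum>b=1..p. if ?W a b then
      ?G x x + ?G (q+a) (q+a) + ?G (q+b) (q+b) + 2 * ?G x (q+a) + 2 * ?G x (q+b) + 2 * ?G (q+a) (q+b) else 0)"
    by (intro sum_nonneg) (simp add: tri)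
  also have "\<dots> = (\<Sum>x=1..q. \<Sum>a=1..p. \<Sum>b=1..p.
        (if ?W a b then 3 + 2 * ?G x (q+a) else 0) + (if ?W a b then 2 * ?G x (q+b) else 0)
        + (if ?W a b then 2 * ?G (q+a) (q+b) else 0))"
    using assms by (intro sum.cong refl) auto
  also have "\<dots> = (\<Sum>x=1..q. \<Sum>a=1..p. real q * (3 + 2 * ?G x (q+a)))
       + (\<Sum>x=1..q. \<Sum>a=1..p. \<Sum>b=1..p. if ?W a b then 2 * ?G x (q+b) else 0)
       + real q * (\<Sum>a=1..p. \<Sum>b=1..p. if ?W a b then 2 * ?G (q+a) (q+b) else 0)"
  proof -
    have e1: "(\<Sum>x=1..q. \<Sum>a=1..p. \<Sum>b=1..p. if ?W a b then 3 + 2 * ?G x (q+a) else 0)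
       = (\<Sum>x=1..q. \<Sum>a=1..p. real q * (3 + 2 * ?G x (q+a)))"
      by (intro sum.cong refl deg_sum) (auto simp: assms(1))
    have e3: "(\<Sum>x=1..q. \<Sum>a=1..p. \<Sum>b=1..p. if ?W a b then 2 * ?G (q+a) (q+b) else 0)
       = real q * (\<Sum>a=1..p. \<Sum>b=1..p. if ?W a b then 2 * ?G (q+a) (q+b) else 0)"
      by simp
    show ?thesis by (simp only: sum.distrib e1 e3)
  qed
  also have "(\<Sum>x=1..q. \<Sum>a=1..p. \<Sum>b=1..p. if ?W a b then 2 * ?G x (q+b) else 0)
      = (\<Sum>x=1..q. \<Sum>b=1..p. real q * (2 * ?G x (q+b)))"
  proof (rule sum.cong[OF refl])
    fix x
    have "(\<Sum>a=1..p. \<Sum>b=1..p. if ?W a b then 2 * ?G x (q+b) else 0)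
        = (\<Sum>b=1..p. \<Sum>a=1..p. if ?W b a then 2 * ?G x (q+b) else 0)"
      by (subst sum.swap) (simp add: web_sym)
    also have "\<dots> = (\<Sum>b=1..p. real q * (2 * ?G x (q+b)))"
      by (intro sum.cong refl deg_sum) (auto simp: assms(1))
    finally show "(\<Sum>a=1..p. \<Sum>b=1..p. if ?W a b then 2 * ?G x (q+b) else 0)
      = (\<Sum>b=1..p. real q * (2 * ?G x (q+b)))" .
  qed
  also have "(\<Sum>x=1..q. \<Sum>a=1..p. real q * (3 + 2 * ?G x (q+a))) + (\<Sum>x=1..q. \<Sum>b=1..p. real q * (2 * ?G x (q+b)))
       + real q * (\<Sum>a=1..p. \<Sum>b=1..p. if ?W a b then 2 * ?G (q+a) (q+b) else 0)
     = 3 * real p * real q * real q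
     + 4 * real q * (\<Sum>x=1..q. \<Sum>a=1..p. ?G x (q+a))
     + 2 * real q * (\<Sum>a=1..p. \<Sum>b=1..p. if ?W a b then ?G (q+a) (q+b) else 0)"
    by (simp add: sum.distrib sum_distrib_left algebra_simps if_distrib[of "\<lambda>t. 2 * t"] cong: if_cong)
  finally show ?thesis .
qed



lemma cw_sym: "cw_adj p q r i j = cw_adj p q r j i"
  unfolding cw_adj_def using web_sym by blast

lemma edge_decomp:
  fixes g :: "nat \<Rightarrow> nat \<Rightarrow> real"
  assumes nd: "n = p + q" and symg: "\<And>i j. g i j = g j i"
  shows "(\<Sum>(i,j)\<in>edges n (cw_adj p q r). g i j) =
    ((\<Sum>x=1..q. \<Sum>y=1..q. g x y) - (\<Sum>x=1..q. g x x) + 2 * (\<Sum>x=1..q. \<Sum>a=1..p. g x (q+a))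
       + (\<Sum>a=1..p. \<Sum>b=1..p. if web_adj p r a b then g (q+a) (q+b) else 0)) / 2"
proof -
  let ?G = g
  let ?C = "\<lambda>i j. if cw_adj p q r i j then ?G i j else 0"
  have e0: "(\<Sum>(i,j)\<in>edges n (cw_adj p q r). ?G i j) = (\<Sum>i=1..n. \<Sum>j=1..n. ?C i j) / 2"
    by (rule half) (auto simp: cw_sym cw_adj_def symg)
  have "(\<Sum>i=1..n. \<Sum>j=1..n. ?C i j) = (\<Sum>i=1..n. (\<Sum>y=1..q. ?C i y) + (\<Sum>b=1..p. ?C i (q+b)))"
    by (intro sum.cong refl split_n nd)
  also have "\<dots> = (\<Sum>x=1..q. (\<Sum>y=1..q. ?C x y) + (\<Sum>b=1..p. ?C x (q+b)))
        + (\<Sum>a=1..p. (\<Sum>y=1..q. ?C (q+a) y) + (\<Sum>b=1..p. ?C (q+a) (q+b)))"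
    by (rule split_n[OF nd])
  also have "\<dots> = (\<Sum>x=1..q. (\<Sum>y=1..q. if x \<noteq> y then ?G x y else 0) + (\<Sum>b=1..p. ?G x (q+b)))
        + (\<Sum>a=1..p. (\<Sum>y=1..q. ?G (q+a) y) + (\<Sum>b=1..p. if web_adj p r a b then ?G (q+a) (q+b) else 0))"
  proof -
    have "cw_adj p q r (q+a) (q+b) = web_adj p r a b" if "a \<ge> 1" "b \<ge> 1" for a b
      using that unfolding cw_adj_def web_adj_def by auto
    then show ?thesis by (intro arg_cong2[where f="(+)"] sum.cong refl) (auto simp: cw_adj_def)
  qed
  also have "\<dots> = (\<Sum>x=1..q. \<Sum>y=1..q. ?G x y) - (\<Sum>x=1..q. g x x) + 2 * (\<Sum>x=1..q. \<Sum>a=1..p. ?G x (q+a))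
       + (\<Sum>a=1..p. \<Sum>b=1..p. if web_adj p r a b then ?G (q+a) (q+b) else 0)"
  proof -
    have r1: "(\<Sum>y=1..q. if x \<noteq> y then ?G x y else 0) = (\<Sum>y=1..q. ?G x y) - g x x" if "x \<in> {1..q}" for x
    proof -
      have "(\<Sum>y=1..q. ?G x y) = (\<Sum>y=1..q. (if x \<noteq> y then ?G x y else 0) + (if x = y then ?G x y else 0))"
        by (intro sum.cong) auto
      also have "\<dots> = (\<Sum>y=1..q. if x \<noteq> y then ?G x y else 0) + ?G x x"
        using that by (simp add: sum.distrib)
      finally show ?thesis by auto
    qed
    have r2: "(\<Sum>a=1..p. \<Sum>y=1..q. ?G (q+a) y) = (\<Sum>x=1..q. \<Sum>a=1..p. ?G x (q+a))"
      by (subst sum.swap) (simp add: symg)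
    have r3: "(\<Sum>x=1..q. \<Sum>y=1..q. if x \<noteq> y then ?G x y else 0) = (\<Sum>x=1..q. \<Sum>y=1..q. ?G x y) - (\<Sum>x=1..q. g x x)"
      using r1 by (simp add: sum_subtractf)
    show ?thesis
      by (simp only: sum.distrib r3 r2)
  qed
  finally show ?thesis unfolding e0 by simp
qed

lemma fin_arith: "0 \<le> (A::real) \<Longrightarrow> - 3 * P * Q / 2 \<le> 2 * X + Y \<Longrightarrow> - ((A - Q + 2 * X + Y) / 2) \<le> Q / 2 + 3 * P * Q / 4"
  by (simp add: field_simps)

lemma sdp_bound:
  assumes q1: "q \<ge> 1" and pd: "p = q + 2*r + 1" and nd: "n = p + q"
    and unit: "\<forall>i\<in>{1..n}. (\<Sum>k=1..n. (u i k)\<^sup>2) = 1"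
  shows "(\<Sum>(i,j)\<in>edges n (cw_adj p q r). (-1) * gram u n i j) \<le> real q / 2 + 3 * real p * real q / 4"
proof -
  let ?G = "gram u n"
  have Gii: "\<forall>i\<in>{1..n}. ?G i i = 1" using unit by (simp add: gram_def power2_eq_square)
  have "(\<Sum>(i,j)\<in>edges n (cw_adj p q r). (-1) * ?G i j) = - (\<Sum>(i,j)\<in>edges n (cw_adj p q r). ?G i j)"
    by (simp add: sum_negf case_prod_beta)
  note e0 = this[unfolded edge_decomp[OF nd gram_sym]]
  have dq: "(\<Sum>x=1..q. ?G x x) = real q" using Gii nd by simp
  have cl: "0 \<le> (\<Sum>x=1..q. \<Sum>y=1..q. ?G x y)" by (rule clique) simp
  note cwb = cross_web[OF pd Gii nd]
  have qpos: "0 < real q" using q1 by simp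
  have "- 3 * real p * real q / 2 \<le> 2 * (\<Sum>x=1..q. \<Sum>a=1..p. ?G x (q+a))
       + (\<Sum>a=1..p. \<Sum>b=1..p. if web_adj p r a b then ?G (q+a) (q+b) else 0)"
  proof -
    let ?X = "(\<Sum>x=1..q. \<Sum>a=1..p. ?G x (q+a))"
    let ?Y = "(\<Sum>a=1..p. \<Sum>b=1..p. if web_adj p r a b then ?G (q+a) (q+b) else 0)"
    have "0 \<le> real q * (3 * real p * real q + 4 * ?X + 2 * ?Y)" using cwb by (simp add: algebra_simps)
    then have "0 \<le> 3 * real p * real q + 4 * ?X + 2 * ?Y" using qpos by (simp add: zero_le_mult_iff)
    then show ?thesis by simp
  qed
  then show ?thesis unfolding e0 dq using cl fin_arith by blast
qed

definition xw :: "nat \<Rightarrow> nat \<Rightarrow> real" where "xw q i = (if i \<le> q then -1 else 1)"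

lemma ip_witness:
  assumes pd: "p = q + 2*r + 1" and nd: "n = p + q"
  shows "(\<Sum>(i,j)\<in>edges n (cw_adj p q r). (-1) * xw q i * xw q j) = real q * (real r + 1)"
proof -
  have e: "(\<Sum>(i,j)\<in>edges n (cw_adj p q r). (-1) * xw q i * xw q j) =
    ((\<Sum>x=1..q. \<Sum>y=1..q. (-1) * xw q x * xw q y) - (\<Sum>x=1..q. (-1) * xw q x * xw q x)
       + 2 * (\<Sum>x=1..q. \<Sum>a=1..p. (-1) * xw q x * xw q (q+a))
       + (\<Sum>a=1..p. \<Sum>b=1..p. if web_adj p r a b then (-1) * xw q (q+a) * xw q (q+b) else 0)) / 2"
    by (rule edge_decomp[OF nd]) simp
  have y: "(\<Sum>a=1..p. \<Sum>b=1..p. if web_adj p r a b then (-1) * xw q (q+a) * xw q (q+b) else 0)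
      = (\<Sum>a=1..p. real q * (-1))"
  proof (intro sum.cong refl)
    fix a assume a: "a \<in> {1..p}"
    have "(\<Sum>b=1..p. if web_adj p r a b then (-1) * xw q (q+a) * xw q (q+b) else 0)
       = (\<Sum>b=1..p. if web_adj p r a b then (-1::real) else 0)"
      using a by (intro sum.cong refl) (auto simp: xw_def)
    also have "\<dots> = real q * (-1)" by (rule deg_sum[OF a pd])
    finally show "(\<Sum>b=1..p. if web_adj p r a b then (-1) * xw q (q+a) * xw q (q+b) else 0) = real q * (-1)" .
  qed
  have "(\<Sum>(i,j)\<in>edges n (cw_adj p q r). (-1) * xw q i * xw q j) =
     (- real q * real q + real q + 2 * (real q * real p) - real p * real q) / 2"
    unfolding e y by (simp add: xw_def)
  also have "\<dots> = real q * (real r + 1)" using pd by (simp add: algebra_simps)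
  finally show ?thesis .
qed


theorem mainTheorem11:
  fixes p q r n :: nat
  assumes "q \<ge> 2" and "p = q + 2 * r + 1" and "n = p + q" and "q \<le> 2 * r"
  shows "sdp n (cw_adj p q r) (\<lambda>i j. -1) / ip n (cw_adj p q r) (\<lambda>i j. -1) \<le> 3"
proof -
  note pd = assms(2) and nd = assms(3)
  let ?f = "\<lambda>x. (\<Sum>(i,j)\<in>edges n (cw_adj p q r). (\<lambda>i j. -1::real) i j * x i * x j)"
  let ?S = "{?f x | x. \<forall>i\<in>{1..n}. x i \<in> {-1, 1}}"
  have fin: "finite ?S"
  proof (rule finite_subset)
    show "?S \<subseteq> ?f ` (PiE {1..n} (\<lambda>_. {-1, 1}))"
    proof
      fix v assume "v \<in> ?S"
      then obtain x where x: "v = ?f x" "\<forall>i\<in>{1..n}. x i \<in> {-1, 1}" by blast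
      have "?f x = ?f (restrict x {1..n})"
        by (intro sum.cong refl) (auto simp: edges_def)
      moreover have "restrict x {1..n} \<in> PiE {1..n} (\<lambda>_. {-1, 1})" using x(2) by auto
      ultimately show "v \<in> ?f ` (PiE {1..n} (\<lambda>_. {-1, 1}))" using x(1) by blast
    qed
    show "finite (?f ` (PiE {1..n} (\<lambda>_. {-1::real, 1})))" by (intro finite_imageI finite_PiE) auto
  qed
  have mem: "?f (xw q) \<in> ?S"
  proof -
    have "\<forall>i\<in>{1..n}. xw q i \<in> {-1, 1}" by (simp add: xw_def)
    then show ?thesis by (intro CollectI exI[of _ "xw q"]) simp
  qed
  have fx: "?f (xw q) = real q * (real r + 1)"
    using ip_witness[OF pd nd] by simp
  have ipge: "real q * (real r + 1) \<le> ip n (cw_adj p q r) (\<lambda>i j. -1)"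
    unfolding ip_def using Max_ge[OF fin mem] fx by simp
  have qpos: "0 < real q * (real r + 1)" using assms(1) by simp
  let ?T = "{(\<Sum>(i,j)\<in>edges n (cw_adj p q r). (\<lambda>i j. -1::real) i j * (\<Sum>k=1..n. u i k * u j k)) | u.
                    \<forall>i\<in>{1..n}. (\<Sum>k=1..n. (u i k)\<^sup>2) = 1}"
  have Tne: "?T \<noteq> {}"
  proof -
    define u0 where "u0 = (\<lambda>(i::nat) (k::nat). if k = 1 then 1 else (0::real))"
    have h: "\<forall>i\<in>{1..n}. (\<Sum>k=1..n. (u0 i k)\<^sup>2) = 1"
      using nd pd by (auto simp: u0_def if_distrib[of "\<lambda>t. t^2"] cong: if_cong)
    have "(\<Sum>(i,j)\<in>edges n (cw_adj p q r). (\<lambda>i j. -1::real) i j * (\<Sum>k=1..n. u0 i k * u0 j k)) \<in> ?T"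
      by (rule CollectI, rule exI[of _ u0], rule conjI[OF refl h])
    then show ?thesis by (metis empty_iff)
  qed
  have Tb: "t \<le> real q / 2 + 3 * real p * real q / 4" if "t \<in> ?T" for t
  proof -
    obtain u where u: "t = (\<Sum>(i,j)\<in>edges n (cw_adj p q r). (\<lambda>i j. -1::real) i j * (\<Sum>k=1..n. u i k * u j k))"
      "\<forall>i\<in>{1..n}. (\<Sum>k=1..n. (u i k)\<^sup>2) = 1" using \<open>t \<in> ?T\<close> by blast
    have "t = (\<Sum>(i,j)\<in>edges n (cw_adj p q r). (-1) * gram u n i j)"
      unfolding u(1) gram_def by simp
    also have "\<dots> \<le> real q / 2 + 3 * real p * real q / 4"
      using sdp_bound[OF _ pd nd u(2)] assms(1) by simp
    finally show ?thesis .
  qed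
  have sdple: "sdp n (cw_adj p q r) (\<lambda>i j. -1) \<le> real q / 2 + 3 * real p * real q / 4"
    unfolding sdp_def by (rule cSup_least[OF Tne]) (rule Tb)
  have ar: "real q / 2 + 3 * real p * real q / 4 \<le> 3 * (real q * (real r + 1))"
  proof -
    have "2 + 3 * p \<le> 12 * r + 12" using pd assms(4) by simp
    then have "real (2 + 3 * p) * real q \<le> real (12 * r + 12) * real q"
      by (intro mult_right_mono) (simp_all only: of_nat_le_iff of_nat_0_le_iff)
    then show ?thesis by (simp add: algebra_simps)
  qed
  have "sdp n (cw_adj p q r) (\<lambda>i j. -1) \<le> 3 * ip n (cw_adj p q r) (\<lambda>i j. -1)"
    using sdple ar ipge by linarith
  moreover have "0 < ip n (cw_adj p q r) (\<lambda>i j. -1)" using qpos ipge by linarith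
  ultimately show ?thesis by (simp add: divide_le_eq)
qed

end
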